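(* Let $V_i\sim\mathcal M[\underline\sigma_i,\overline\sigma_i]$ with $\underline\sigma_i\le\overline\sigma_i$, $i=1,\dots,d$. The following are equivalent: (1) $V_1\dashrightarrow V_2\dashrightarrow\cdots\dashrightarrow V_d$; (2) $V_{i_1}\dashrightarrow V_{i_2}\dashrightarrow\cdots\dashrightarrow V_{i_d}$ for every permutation $(i_1,\dots,i_d)$ of $(1,\dots,d)$; (3) $(V_1,\dots,V_d)\sim\mathcal M\big(\prod_{i=1}^d[\underline\sigma_i,\overline\sigma_i]\big)$.
   Context: Sublinear expectation space $(\Omega,\mathcal H,\hat{\mathbb E})$, $\hat{\mathbb E}[X]=\sup_{Q\in\mathcal P}E_Q[X]$. $C_{b,Lip}$: bounded Lipschitz functions; $C_{l.Lip}(\mathbb R^d)$: $|\varphi(x)-\varphi(y)|\le C(1+|x|^k+|y|^k)|x-y|$. $X\dashrightarrow Y$ means $\hat{\mathbb E}[\varphi(X,Y)]=\hat{\mathbb E}[\hat{\mathbb E}[\varphi(x,Y)]_{x=X}]$ for all $\varphi\in C_{b,Lip}$; $X_1\dashrightarrow\cdots\dashrightarrow X_n$ means $(X_1,\dots,X_i)\dashrightarrow X_{i+1}$ for each $i$. For a compact convex $\Theta\subset\mathbb R^d$, a random vector $\mathbf V\sim\mathcal M(\Theta)$ (maximal distribution) if $\hat{\mathbb E}[\varphi(\mathbf V)]=\max_{\theta\in\Theta}\varphi(\theta)$ for all $\varphi\in C_{l.Lip}(\mathbb R^d)$; $\mathcal M[a,b]$ is the case $d=1$, $\Theta=[a,b]$.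 *)

theory Defs
  imports "HOL-Probability.Probability" "HOL-Combinatorics.Permutations"
begin

text \<open>Points of R^n are represented as real lists of length n; the Euclidean norm:\<close>
definition lnorm :: "real list \<Rightarrow> real" where
  "lnorm xs = sqrt (sum_list (map (\<lambda>x. x ^ 2) xs))"

definition lLip :: "nat \<Rightarrow> (real list \<Rightarrow> real) \<Rightarrow> bool" where
  "lLip n \<phi> \<longleftrightarrow> (\<exists>C k::nat. \<forall>x y. length x = n \<longrightarrow> length y = n \<longrightarrow>
      \<bar>\<phi> x - \<phi> y\<bar> \<le> C * (1 + lnorm x ^ k + lnorm y ^ k) * lnorm (map2 (-) x y))"

definition bLip :: "nat \<Rightarrow> (real list \<Rightarrow> real) \<Rightarrow> bool" where
  "bLip n \<phi> \<longleftrightarrow> (\<exists>B. \<forall>x. length x = n \<longrightarrow> \<bar>\<phi> x\<bar> \<le> B) \<and>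
     (\<exists>L. \<forall>x y. length x = n \<longrightarrow> length y = n \<longrightarrow> \<bar>\<phi> x - \<phi> y\<bar> \<le> L * lnorm (map2 (-) x y))"

text \<open>Sublinear expectation space (Omega, H, E) with E X = sup over Q in P of E_Q X.\<close>
definition sublinear_expectation_space ::
  "'w set \<Rightarrow> ('w \<Rightarrow> real) set \<Rightarrow> 'w measure set \<Rightarrow> (('w \<Rightarrow> real) \<Rightarrow> real) \<Rightarrow> bool" where
  "sublinear_expectation_space \<Omega> H P E \<longleftrightarrow>
     P \<noteq> {} \<and> (\<forall>Q\<in>P. prob_space Q \<and> space Q = \<Omega>) \<and>
     (\<forall>c. (\<lambda>_. c) \<in> H) \<and>
     (\<forall>X\<in>H. \<forall>Y\<in>H. (\<lambda>w. X w + Y w) \<in> H) \<and>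
     (\<forall>a. \<forall>X\<in>H. (\<lambda>w. a * X w) \<in> H) \<and>
     (\<forall>n \<phi> Xs. lLip n \<phi> \<and> length Xs = n \<and> set Xs \<subseteq> H \<longrightarrow>
         (\<lambda>w. \<phi> (map (\<lambda>X. X w) Xs)) \<in> H) \<and>
     (\<forall>X\<in>H. \<forall>Q\<in>P. integrable Q X) \<and>
     (\<forall>X\<in>H. bdd_above ((\<lambda>Q. integral\<^sup>L Q X) ` P)) \<and>
     (\<forall>X\<in>H. E X = (SUP Q\<in>P. integral\<^sup>L Q X))"

definition vals :: "('w \<Rightarrow> real) list \<Rightarrow> 'w \<Rightarrow> real list" where
  "vals Xs w = map (\<lambda>X. X w) Xs"

text \<open>X --> Y (Y independent of X)\<close>
definition indep_of :: "(('w \<Rightarrow> real) \<Rightarrow> real) \<Rightarrow> ('w \<Rightarrow> real) list \<Rightarrow> ('w \<Rightarrow> real) list \<Rightarrow> bool" where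
  "indep_of E Xs Ys \<longleftrightarrow> (\<forall>\<phi>. bLip (length Xs + length Ys) \<phi> \<longrightarrow>
     E (\<lambda>w. \<phi> (vals Xs w @ vals Ys w)) =
     E (\<lambda>w. (\<lambda>x. E (\<lambda>w'. \<phi> (x @ vals Ys w'))) (vals Xs w)))"

definition seq_indep :: "(('w \<Rightarrow> real) \<Rightarrow> real) \<Rightarrow> ('w \<Rightarrow> real) list \<Rightarrow> bool" where
  "seq_indep E Xs \<longleftrightarrow> (\<forall>i. 0 < i \<and> i < length Xs \<longrightarrow> indep_of E (take i Xs) [Xs ! i])"

definition maximal_dist :: "(('w \<Rightarrow> real) \<Rightarrow> real) \<Rightarrow> ('w \<Rightarrow> real) list \<Rightarrow> real list set \<Rightarrow> bool" where
  "maximal_dist E Xs \<Theta> \<longleftrightarrow> (\<forall>\<phi>. lLip (length Xs) \<phi> \<longrightarrow>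
     (\<exists>\<theta>\<in>\<Theta>. E (\<lambda>w. \<phi> (vals Xs w)) = \<phi> \<theta> \<and> (\<forall>\<theta>'\<in>\<Theta>. \<phi> \<theta>' \<le> \<phi> \<theta>)))"

definition box_list :: "nat \<Rightarrow> (nat \<Rightarrow> real) \<Rightarrow> (nat \<Rightarrow> real) \<Rightarrow> real list set" where
  "box_list d lo hi = {xs. length xs = d \<and> (\<forall>i<d. lo i \<le> xs ! i \<and> xs ! i \<le> hi i)}"

end

theory Submission
  imports Defs
begin

lemma sq_sum_nonneg: "0 \<le> sum_list (map (\<lambda>x::real. x ^ 2) xs)"
  by (induct xs) auto

lemma lnorm_nonneg: "0 \<le> lnorm xs"
  unfolding lnorm_def by (simp add: sq_sum_nonneg)

lemma lnorm_sum: "lnorm xs = sqrt (\<Sum>j<length xs. (xs ! j)^2)"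
proof -
  have "sum_list (map (\<lambda>x. x ^ 2) xs) = sum_list (map (\<lambda>j. (xs!j)^2) [0..<length xs])"
    by (metis (no_types, lifting) map_map map_nth o_apply map_eq_conv)
  also have "\<dots> = (\<Sum>j<length xs. (xs ! j)^2)"
    by (simp add: interv_sum_list_conv_sum_set_nat atLeast0LessThan)
  finally show ?thesis unfolding lnorm_def by simp
qed

lemma lnorm_mono:
  assumes "length x = length y" "\<And>j. j < length x \<Longrightarrow> \<bar>x!j\<bar> \<le> \<bar>y!j\<bar>"
  shows "lnorm x \<le> lnorm y"
  unfolding lnorm_sum using assms
  by (auto intro!: real_sqrt_le_mono sum_mono simp: abs_le_square_iff)

lemma lnorm_append_sq: "(lnorm (xs @ ys))^2 = (lnorm xs)^2 + (lnorm ys)^2"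
  unfolding lnorm_def using sq_sum_nonneg[of xs] sq_sum_nonneg[of ys] by simp

lemma lnorm_eq_sq: "lnorm a = lnorm b \<longleftrightarrow> (lnorm a)^2 = (lnorm b)^2"
  using lnorm_nonneg[of a] lnorm_nonneg[of b] by (metis power2_eq_iff_nonneg)

lemma lnorm_le_sq: "lnorm a \<le> lnorm b \<longleftrightarrow> (lnorm a)^2 \<le> (lnorm b)^2"
  using lnorm_nonneg[of a] lnorm_nonneg[of b] by (simp add: power_mono_iff)

lemma lnorm_prefix: "lnorm xs \<le> lnorm (xs @ ys)"
  unfolding lnorm_le_sq lnorm_append_sq by simp

lemma lnorm_single: "lnorm [a] = \<bar>a\<bar>"
  unfolding lnorm_def by simp

lemma lnorm_zero: "lnorm (map2 (-) x x) = 0"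
  unfolding lnorm_def by (induct x) auto

lemma map2_append: "length x = length y \<Longrightarrow> map2 f (x @ a) (y @ b) = map2 f x y @ map2 f a b"
  by simp

lemma lnorm_same_prefix: "length a = length b \<Longrightarrow> lnorm (map2 (-) (x @ a) (x @ b)) = lnorm (map2 (-) a b)"
  unfolding lnorm_eq_sq by (simp add: lnorm_append_sq lnorm_zero)

lemma lnorm_same_suffix: "length x = length y \<Longrightarrow> lnorm (map2 (-) (x @ a) (y @ a)) = lnorm (map2 (-) x y)"
  unfolding lnorm_eq_sq by (simp add: lnorm_append_sq lnorm_zero)

lemma lnorm_zero_prefix[simp]: "lnorm (map2 (-) x x @ r) = lnorm r"
  unfolding lnorm_eq_sq by (simp add: lnorm_append_sq lnorm_zero)

lemma lnorm_append_zero[simp]: "lnorm (r @ [0]) = lnorm r"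
  unfolding lnorm_eq_sq by (simp add: lnorm_append_sq lnorm_single)

lemma lnorm_take: "lnorm (map2 (-) (take i x) (take i y)) \<le> lnorm (map2 (-) x y)"
proof -
  have "map2 (-) x y = map2 (-) (take i x) (take i y) @ map2 (-) (drop i x) (drop i y)"
    by (metis append_take_drop_id drop_zip map_append take_zip)
  then show ?thesis by (metis lnorm_prefix)
qed


definition lipL :: "nat \<Rightarrow> real \<Rightarrow> (real list \<Rightarrow> real) \<Rightarrow> bool" where
  "lipL n L \<phi> \<longleftrightarrow> (\<forall>x y. length x = n \<longrightarrow> length y = n \<longrightarrow> \<bar>\<phi> x - \<phi> y\<bar> \<le> L * lnorm (map2 (-) x y))"

lemma lipL_lLip: assumes "lipL n L \<phi>" shows "lLip n \<phi>"
  unfolding lLip_def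
proof (intro exI[of _ "max L 0"] exI[of _ "0::nat"] allI impI)
  fix x y :: "real list" assume "length x = n" "length y = n"
  then have "\<bar>\<phi> x - \<phi> y\<bar> \<le> L * lnorm (map2 (-) x y)" using assms unfolding lipL_def by blast
  also have "\<dots> \<le> max L 0 * (1 + lnorm x ^ 0 + lnorm y ^ 0) * lnorm (map2 (-) x y)"
    using lnorm_nonneg[of "map2 (-) x y"]
    by (simp add: mult_right_mono)
  finally show "\<bar>\<phi> x - \<phi> y\<bar> \<le> max L 0 * (1 + lnorm x ^ 0 + lnorm y ^ 0) * lnorm (map2 (-) x y)" .
qed

lemma bLip_lipL: "bLip n \<phi> \<Longrightarrow> \<exists>L. lipL n L \<phi>"
  unfolding bLip_def lipL_def by blast

definition clampL :: "nat \<Rightarrow> (nat \<Rightarrow> real) \<Rightarrow> (nat \<Rightarrow> real) \<Rightarrow> real list \<Rightarrow> real list" where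
  "clampL n lo hi x = map (\<lambda>j. max (lo j) (min (hi j) (x ! j))) [0..<n]"

lemma clampL_box: "(\<And>j. j < n \<Longrightarrow> lo j \<le> hi j) \<Longrightarrow> clampL n lo hi x \<in> box_list n lo hi"
  unfolding clampL_def box_list_def by auto

lemma clampL_id: "y \<in> box_list n lo hi \<Longrightarrow> clampL n lo hi y = y"
  unfolding clampL_def box_list_def by (auto intro!: nth_equalityI)

lemma clampL_lip: "length x = n \<Longrightarrow> length y = n \<Longrightarrow>
   lnorm (map2 (-) (clampL n lo hi x) (clampL n lo hi y)) \<le> lnorm (map2 (-) x y)"
  unfolding clampL_def by (rule lnorm_mono) (auto simp: abs_le_iff)

definition boxR :: "nat \<Rightarrow> (nat \<Rightarrow> real) \<Rightarrow> (nat \<Rightarrow> real) \<Rightarrow> real" where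
  "boxR n lo hi = lnorm (map (\<lambda>j. \<bar>lo j\<bar> + \<bar>hi j\<bar>) [0..<n])"

lemma box_norm: "y \<in> box_list n lo hi \<Longrightarrow> lnorm y \<le> boxR n lo hi"
  unfolding boxR_def box_list_def by (rule lnorm_mono) (auto simp: abs_le_iff)

lemma box_diff_norm: "a \<in> box_list n lo hi \<Longrightarrow> b \<in> box_list n lo hi \<Longrightarrow> lnorm (map2 (-) a b) \<le> boxR n lo hi"
  unfolding boxR_def box_list_def
  apply (rule lnorm_mono)
   apply (auto simp: abs_le_iff)
  apply (smt (verit) abs_ge_self abs_ge_minus_self)+
  done

lemma clamp_bLip:
  assumes "lLip n \<phi>" "\<And>j. j < n \<Longrightarrow> lo j \<le> hi j"
  shows "bLip n (\<lambda>x. \<phi> (clampL n lo hi x))"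
proof -
  obtain C and k :: nat where C: "\<And>x y. length x = n \<Longrightarrow> length y = n \<Longrightarrow>
      \<bar>\<phi> x - \<phi> y\<bar> \<le> C * (1 + lnorm x ^ k + lnorm y ^ k) * lnorm (map2 (-) x y)"
    using assms(1) unfolding lLip_def by blast
  define R where "R = boxR n lo hi"
  define K where "K = \<bar>C\<bar> * (1 + R ^ k + R ^ k)"
  have inb: "clampL n lo hi x \<in> box_list n lo hi" for x using clampL_box assms(2) by blast
  have len: "length (clampL n lo hi x) = n" for x by (simp add: clampL_def)
  have key: "\<bar>\<phi> (clampL n lo hi x) - \<phi> (clampL n lo hi y)\<bar> \<le> K * lnorm (map2 (-) (clampL n lo hi x) (clampL n lo hi y))" for x y
  proof -
    let ?a = "clampL n lo hi x" and ?b = "clampL n lo hi y"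
    have "\<bar>\<phi> ?a - \<phi> ?b\<bar> \<le> C * (1 + lnorm ?a ^ k + lnorm ?b ^ k) * lnorm (map2 (-) ?a ?b)"
      using C len by blast
    also have "\<dots> \<le> \<bar>C\<bar> * (1 + lnorm ?a ^ k + lnorm ?b ^ k) * lnorm (map2 (-) ?a ?b)"
      using lnorm_nonneg[of ?a] lnorm_nonneg[of ?b] lnorm_nonneg[of "map2 (-) ?a ?b"]
      by (intro mult_right_mono) (auto intro!: mult_right_mono)
    also have "\<dots> \<le> K * lnorm (map2 (-) ?a ?b)"
      unfolding K_def
      using lnorm_nonneg[of ?a] lnorm_nonneg[of ?b] lnorm_nonneg[of "map2 (-) ?a ?b"]
        box_norm[OF inb[of x]] box_norm[OF inb[of y]]
      by (intro mult_right_mono mult_left_mono add_mono power_mono) (auto simp: R_def)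
    finally show ?thesis .
  qed
  have K0: "0 \<le> K" unfolding K_def R_def using lnorm_nonneg unfolding boxR_def by simp
  show ?thesis unfolding bLip_def
  proof (intro conjI exI allI impI)
    fix x :: "real list" assume "length x = n"
    have "\<bar>\<phi> (clampL n lo hi x) - \<phi> (clampL n lo hi x')\<bar> \<le> K * R" for x'
      using key[of x x'] box_diff_norm[OF inb[of x] inb[of x']] K0 unfolding R_def
      by (meson mult_left_mono order_trans)
    then show "\<bar>\<phi> (clampL n lo hi x)\<bar> \<le> \<bar>\<phi> (clampL n lo hi [])\<bar> + K * R"
      using key by (smt (verit))
  next
    fix x y :: "real list" assume "length x = n" "length y = n"
    then show "\<bar>\<phi> (clampL n lo hi x) - \<phi> (clampL n lo hi y)\<bar> \<le> K * lnorm (map2 (-) x y)"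
      using key[of x y] clampL_lip[of x n y lo hi] K0 by (meson mult_left_mono order_trans)
  qed
qed


lemma psi_props:
  assumes lip: "lipL (Suc m) L \<psi>0"
    and mY: "maximal_dist E [Y] {[t] | t. a \<le> t \<and> t \<le> b}" and len: "length x = m"
  shows "\<exists>t. a \<le> t \<and> t \<le> b \<and> E (\<lambda>w'. \<psi>0 (x @ vals [Y] w')) = \<psi>0 (x @ [t]) \<and>
          (\<forall>s. a \<le> s \<and> s \<le> b \<longrightarrow> \<psi>0 (x @ [s]) \<le> \<psi>0 (x @ [t]))"
proof -
  have "lipL 1 L (\<lambda>ys. \<psi>0 (x @ ys))"
    unfolding lipL_def
  proof (intro allI impI)
    fix ys zs :: "real list" assume "length ys = 1" "length zs = 1"
    then show "\<bar>\<psi>0 (x @ ys) - \<psi>0 (x @ zs)\<bar> \<le> L * lnorm (map2 (-) ys zs)"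
    proof -
      have "length (x @ ys) = Suc m" "length (x @ zs) = Suc m" using len \<open>length ys = 1\<close> \<open>length zs = 1\<close> by auto
      then have "\<bar>\<psi>0 (x @ ys) - \<psi>0 (x @ zs)\<bar> \<le> L * lnorm (map2 (-) (x @ ys) (x @ zs))"
        using lip unfolding lipL_def by blast
      then show ?thesis by simp
    qed
  qed
  then have "lLip (length [Y]) (\<lambda>ys. \<psi>0 (x @ ys))" using lipL_lLip by simp
  then obtain \<theta> where th: "\<theta> \<in> {[t] | t. a \<le> t \<and> t \<le> b}"
    "E (\<lambda>w. \<psi>0 (x @ vals [Y] w)) = \<psi>0 (x @ \<theta>)"
    "\<forall>\<theta>'\<in>{[t] | t. a \<le> t \<and> t \<le> b}. \<psi>0 (x @ \<theta>') \<le> \<psi>0 (x @ \<theta>)"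
    using mY unfolding maximal_dist_def by blast
  then obtain t where "\<theta> = [t]" "a \<le> t" "t \<le> b" by blast
  then show ?thesis using th by (intro exI[of _ t]) auto
qed

lemma psi_lip:
  assumes lip: "lipL (Suc m) L \<psi>0"
    and mY: "maximal_dist E [Y] {[t] | t. a \<le> t \<and> t \<le> b}"
  shows "lipL m L (\<lambda>x. E (\<lambda>w'. \<psi>0 (x @ vals [Y] w')))"
  unfolding lipL_def
proof (intro allI impI)
  fix x y :: "real list" assume lx: "length x = m" and ly: "length y = m"
  obtain tx where tx: "a \<le> tx" "tx \<le> b" "E (\<lambda>w'. \<psi>0 (x @ vals [Y] w')) = \<psi>0 (x @ [tx])"
     "\<forall>s. a \<le> s \<and> s \<le> b \<longrightarrow> \<psi>0 (x @ [s]) \<le> \<psi>0 (x @ [tx])"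
    using psi_props[OF lip mY lx] by blast
  obtain ty where ty: "a \<le> ty" "ty \<le> b" "E (\<lambda>w'. \<psi>0 (y @ vals [Y] w')) = \<psi>0 (y @ [ty])"
     "\<forall>s. a \<le> s \<and> s \<le> b \<longrightarrow> \<psi>0 (y @ [s]) \<le> \<psi>0 (y @ [ty])"
    using psi_props[OF lip mY ly] by blast
  have e1: "lnorm (map2 (-) (x @ [t]) (y @ [t])) = lnorm (map2 (-) x y)" for t
    using lx ly by (simp add: lnorm_same_suffix)
  have l1: "\<bar>\<psi>0 (x @ [t]) - \<psi>0 (y @ [t])\<bar> \<le> L * lnorm (map2 (-) x y)" for t
    using lip lx ly e1[of t] unfolding lipL_def by (metis length_append_singleton)
  have "\<psi>0 (x @ [tx]) - \<psi>0 (y @ [ty]) \<le> L * lnorm (map2 (-) x y)"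
    using l1[of tx] ty(4) tx(1,2) by force
  moreover have "\<psi>0 (y @ [ty]) - \<psi>0 (x @ [tx]) \<le> L * lnorm (map2 (-) x y)"
    using l1[of ty] tx(4) ty(1,2) by force
  ultimately show "\<bar>E (\<lambda>w'. \<psi>0 (x @ vals [Y] w')) - E (\<lambda>w'. \<psi>0 (y @ vals [Y] w'))\<bar> \<le> L * lnorm (map2 (-) x y)"
    using tx(3) ty(3) by linarith
qed


lemma lipL_take:
  assumes "lipL m L \<phi>" "m \<le> d" "0 \<le> L"
  shows "lipL d L (\<lambda>x. \<phi> (take m x))"
  unfolding lipL_def
proof (intro allI impI)
  fix x y :: "real list" assume "length x = d" "length y = d"
  then have "\<bar>\<phi> (take m x) - \<phi> (take m y)\<bar> \<le> L * lnorm (map2 (-) (take m x) (take m y))"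
    using assms unfolding lipL_def by auto
  also have "\<dots> \<le> L * lnorm (map2 (-) x y)"
    using lnorm_take[of m x y] assms(3) by (auto intro: mult_left_mono)
  finally show "\<bar>\<phi> (take m x) - \<phi> (take m y)\<bar> \<le> L * lnorm (map2 (-) x y)" .
qed

lemma lipL_max: assumes "lipL n L \<phi>" shows "lipL n (max L 0) \<phi>"
  unfolding lipL_def
proof (intro allI impI)
  fix x y :: "real list" assume "length x = n" "length y = n"
  then have "\<bar>\<phi> x - \<phi> y\<bar> \<le> L * lnorm (map2 (-) x y)" using assms unfolding lipL_def by blast
  also have "\<dots> \<le> max L 0 * lnorm (map2 (-) x y)"
    by (intro mult_right_mono) (auto simp: lnorm_nonneg)
  finally show "\<bar>\<phi> x - \<phi> y\<bar> \<le> max L 0 * lnorm (map2 (-) x y)" .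
qed

lemma bLip_lipL0: assumes "bLip n \<phi>" shows "\<exists>L\<ge>0. lipL n L \<phi>"
proof -
  obtain L where "lipL n L \<phi>" using bLip_lipL[OF assms] by blast
  then have "lipL n (max L 0) \<phi>" by (rule lipL_max)
  then show ?thesis by (intro exI[of _ "max L 0"]) simp
qed

lemma vals_take: "vals (take i Vs) w = take i (vals Vs w)"
  unfolding vals_def by (simp add: take_map)

lemma vals_take_Suc: "i < length Vs \<Longrightarrow> vals (take i Vs) w @ vals [Vs ! i] w = take (Suc i) (vals Vs w)"
  unfolding vals_def by (simp add: take_map take_Suc_conv_app_nth)

lemma md_apply:
  assumes "maximal_dist E Xs \<Theta>" "lLip (length Xs) f"
  shows "\<exists>\<theta>\<in>\<Theta>. E (\<lambda>w. f (vals Xs w)) = f \<theta> \<and> (\<forall>\<theta>'\<in>\<Theta>. f \<theta>' \<le> f \<theta>)"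
  using assms unfolding maximal_dist_def by blast

lemma three_one_step:
  assumes md: "maximal_dist E Vs (box_list d lo hi)" and lenV: "length Vs = d" and i: "i < d"
    and mY: "maximal_dist E [Vs ! i] {[t] | t. lo i \<le> t \<and> t \<le> hi i}"
  shows "indep_of E (take i Vs) [Vs ! i]"
  unfolding indep_of_def
proof (intro allI impI)
  fix \<phi> assume "bLip (length (take i Vs) + length [Vs ! i]) \<phi>"
  then obtain L where lip: "lipL (Suc i) L \<phi>" and L0: "0 \<le> L" using bLip_lipL0 lenV i by auto
  define \<psi> where "\<psi> x = E (\<lambda>w'. \<phi> (x @ vals [Vs ! i] w'))" for x
  have lip\<psi>: "lipL i L \<psi>" unfolding \<psi>_def by (rule psi_lip[OF lip mY])
  have l1: "lLip (length Vs) (\<lambda>x. \<phi> (take (Suc i) x))"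
    using lipL_lLip[OF lipL_take[OF lip, of "length Vs"]] L0 i lenV by simp
  have l2: "lLip (length Vs) (\<lambda>x. \<psi> (take i x))"
    using lipL_lLip[OF lipL_take[OF lip\<psi>, of "length Vs"]] L0 i lenV by simp
  obtain \<theta> where th: "\<theta> \<in> box_list d lo hi" "E (\<lambda>w. \<phi> (take (Suc i) (vals Vs w))) = \<phi> (take (Suc i) \<theta>)"
    "\<forall>\<theta>'\<in>box_list d lo hi. \<phi> (take (Suc i) \<theta>') \<le> \<phi> (take (Suc i) \<theta>)"
    using md_apply[OF md l1] by auto
  obtain \<theta>' where th': "\<theta>' \<in> box_list d lo hi" "E (\<lambda>w. \<psi> (take i (vals Vs w))) = \<psi> (take i \<theta>')"
    "\<forall>\<theta>''\<in>box_list d lo hi. \<psi> (take i \<theta>'') \<le> \<psi> (take i \<theta>')"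
    using md_apply[OF md l2] by auto
  have lt: "length \<theta> = d" "length \<theta>' = d" using th(1) th'(1) unfolding box_list_def by auto
  have "\<phi> (take (Suc i) \<theta>) \<le> \<psi> (take i \<theta>)"
  proof -
    obtain t where "\<psi> (take i \<theta>) = \<phi> (take i \<theta> @ [t])"
      "\<forall>s. lo i \<le> s \<and> s \<le> hi i \<longrightarrow> \<phi> (take i \<theta> @ [s]) \<le> \<phi> (take i \<theta> @ [t])"
      using psi_props[OF lip mY, of "take i \<theta>"] lt i unfolding \<psi>_def by auto
    moreover have "take (Suc i) \<theta> = take i \<theta> @ [\<theta> ! i]" using lt i by (simp add: take_Suc_conv_app_nth)
    moreover have "lo i \<le> \<theta> ! i \<and> \<theta> ! i \<le> hi i" using th(1) i unfolding box_list_def by auto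
    ultimately show ?thesis by metis
  qed
  also have "\<dots> \<le> \<psi> (take i \<theta>')" using th'(3) th(1) by blast
  finally have le1: "\<phi> (take (Suc i) \<theta>) \<le> \<psi> (take i \<theta>')" .
  have le2: "\<psi> (take i \<theta>') \<le> \<phi> (take (Suc i) \<theta>)"
  proof -
    obtain t where t: "lo i \<le> t" "t \<le> hi i" "\<psi> (take i \<theta>') = \<phi> (take i \<theta>' @ [t])"
      using psi_props[OF lip mY, of "take i \<theta>'"] lt i unfolding \<psi>_def by auto
    have "\<theta>'[i := t] \<in> box_list d lo hi" using th'(1) t lt i unfolding box_list_def
      by (auto simp: nth_list_update)
    moreover have "take (Suc i) (\<theta>'[i := t]) = take i \<theta>' @ [t]"
      using lt i by (simp add: take_Suc_conv_app_nth)
    ultimately show ?thesis using th(3) t(3) by metis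
  qed
  have eq1: "E (\<lambda>w. \<phi> (vals (take i Vs) w @ vals [Vs ! i] w)) = \<phi> (take (Suc i) \<theta>)"
    using th(2) vals_take_Suc[of i Vs] i lenV by simp
  have eq2: "E (\<lambda>w. (\<lambda>x. E (\<lambda>w'. \<phi> (x @ vals [Vs ! i] w'))) (vals (take i Vs) w)) = \<psi> (take i \<theta>')"
    using th'(2) unfolding \<psi>_def vals_take by simp
  show "E (\<lambda>w. \<phi> (vals (take i Vs) w @ vals [Vs ! i] w)) =
         E (\<lambda>w. (\<lambda>x. E (\<lambda>w'. \<phi> (x @ vals [Vs ! i] w'))) (vals (take i Vs) w))"
    unfolding eq1 eq2 using le1 le2 by linarith
qed


lemma three_one:
  assumes md: "maximal_dist E (map V [0..<d]) (box_list d lo hi)"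
    and maxV: "\<And>i. i < d \<Longrightarrow> maximal_dist E [V i] {[t] | t. lo i \<le> t \<and> t \<le> hi i}"
  shows "seq_indep E (map V [0..<d])"
  unfolding seq_indep_def
proof (intro allI impI)
  fix i assume "0 < i \<and> i < length (map V [0..<d])"
  then have i: "i < d" by simp
  have "maximal_dist E [map V [0..<d] ! i] {[t] | t. lo i \<le> t \<and> t \<le> hi i}"
    using maxV[OF i] i by simp
  then show "indep_of E (take i (map V [0..<d])) [map V [0..<d] ! i]"
    using three_one_step[OF md _ i] by simp
qed

lemma perm_md:
  assumes md: "maximal_dist E (map V [0..<d]) (box_list d lo hi)" and p: "p permutes {0..<d}"
  shows "maximal_dist E (map (\<lambda>j. V (p j)) [0..<d]) (box_list d (\<lambda>j. lo (p j)) (\<lambda>j. hi (p j)))"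
  unfolding maximal_dist_def
proof (intro allI impI)
  fix \<phi> assume "lLip (length (map (\<lambda>j. V (p j)) [0..<d])) \<phi>"
  then have l: "lLip d \<phi>" by simp
  define \<pi> where "\<pi> x = map (\<lambda>j. x ! p j) [0..<d]" for x :: "real list"
  have pd: "j < d \<Longrightarrow> p j < d" for j using permutes_in_image[OF p] by simp
  have ipd: "j < d \<Longrightarrow> inv p j < d" for j using permutes_in_image[OF permutes_inv[OF p]] by simp
  have lp: "length (\<pi> x) = d" for x unfolding \<pi>_def by simp
  have np: "lnorm (\<pi> x) = lnorm x" if "length x = d" for x
  proof -
    have "(\<Sum>j\<in>{0..<d}. (x ! p j)^2) = (\<Sum>j\<in>{0..<d}. (x ! j)^2)"
      using sum.reindex_bij_betw[OF permutes_imp_bij[OF p], of "\<lambda>j. (x ! j)^2"] by simp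
    then show ?thesis unfolding lnorm_sum using that lp[of x] by (simp add: \<pi>_def atLeast0LessThan)
  qed
  have mp: "map2 (-) (\<pi> x) (\<pi> y) = \<pi> (map2 (-) x y)" if "length x = d" "length y = d" for x y
    using that pd unfolding \<pi>_def by (auto intro!: nth_equalityI)
  have lpi: "lLip (length (map V [0..<d])) (\<lambda>x. \<phi> (\<pi> x))"
  proof -
    obtain C and k :: nat where C: "\<And>x y. length x = d \<Longrightarrow> length y = d \<Longrightarrow>
        \<bar>\<phi> x - \<phi> y\<bar> \<le> C * (1 + lnorm x ^ k + lnorm y ^ k) * lnorm (map2 (-) x y)"
      using l unfolding lLip_def by blast
    have "\<bar>\<phi> (\<pi> x) - \<phi> (\<pi> y)\<bar> \<le> C * (1 + lnorm x ^ k + lnorm y ^ k) * lnorm (map2 (-) x y)"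
      if "length x = d" "length y = d" for x y
      using C[OF lp lp, of x y] np[OF that(1)] np[OF that(2)] mp[OF that] np[of "map2 (-) x y"] that
      by simp
    then show ?thesis unfolding lLip_def by auto
  qed
  have vp: "vals (map (\<lambda>j. V (p j)) [0..<d]) w = \<pi> (vals (map V [0..<d]) w)" for w
    unfolding vals_def \<pi>_def using pd by (auto intro!: nth_equalityI)
  obtain \<theta> where th: "\<theta> \<in> box_list d lo hi" "E (\<lambda>w. \<phi> (\<pi> (vals (map V [0..<d]) w))) = \<phi> (\<pi> \<theta>)"
    "\<forall>\<theta>'\<in>box_list d lo hi. \<phi> (\<pi> \<theta>') \<le> \<phi> (\<pi> \<theta>)"
    using md_apply[OF md lpi] by auto
  have "\<pi> \<theta> \<in> box_list d (\<lambda>j. lo (p j)) (\<lambda>j. hi (p j))"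
    using th(1) pd unfolding box_list_def \<pi>_def by auto
  moreover have "E (\<lambda>w. \<phi> (vals (map (\<lambda>j. V (p j)) [0..<d]) w)) = \<phi> (\<pi> \<theta>)"
    unfolding vp using th(2) .
  moreover have "\<phi> \<theta>'' \<le> \<phi> (\<pi> \<theta>)" if t: "\<theta>'' \<in> box_list d (\<lambda>j. lo (p j)) (\<lambda>j. hi (p j))" for \<theta>''
  proof -
    define \<eta> where "\<eta> = map (\<lambda>j. \<theta>'' ! inv p j) [0..<d]"
    have "\<eta> \<in> box_list d lo hi"
      using t ipd unfolding box_list_def \<eta>_def
      by (auto, metis permutes_inverses(1)[OF p], metis permutes_inverses(1)[OF p])
    moreover have "\<pi> \<eta> = \<theta>''"
      using t pd unfolding box_list_def \<eta>_def \<pi>_def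
      by (auto intro!: nth_equalityI simp: permutes_inverses(2)[OF p])
    ultimately show ?thesis using th(3) by metis
  qed
  ultimately show "\<exists>\<theta>\<in>box_list d (\<lambda>j. lo (p j)) (\<lambda>j. hi (p j)).
            E (\<lambda>w. \<phi> (vals (map (\<lambda>j. V (p j)) [0..<d]) w)) = \<phi> \<theta> \<and>
            (\<forall>\<theta>'\<in>box_list d (\<lambda>j. lo (p j)) (\<lambda>j. hi (p j)). \<phi> \<theta>' \<le> \<phi> \<theta>)"
    by blast
qed


lemma E_const:
  assumes space: "sublinear_expectation_space \<Omega> H P E"
  shows "E (\<lambda>_. c) = c"
proof -
  have ne: "P \<noteq> {}" and pr: "\<And>Q. Q \<in> P \<Longrightarrow> prob_space Q" and cH: "(\<lambda>_. c) \<in> H"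
    and EH: "\<And>X. X \<in> H \<Longrightarrow> E X = (SUP Q\<in>P. integral\<^sup>L Q X)"
    using space unfolding sublinear_expectation_space_def by auto
  have "E (\<lambda>_. c) = (SUP Q\<in>P. integral\<^sup>L Q (\<lambda>_. c))" using EH[OF cH] .
  also have "\<dots> = (SUP Q\<in>P. c)"
    by (rule SUP_cong) (auto simp: lebesgue_integral_const prob_space.prob_space[OF pr])
  also have "\<dots> = c" using ne by simp
  finally show ?thesis .
qed

lemma H_comp:
  assumes space: "sublinear_expectation_space \<Omega> H P E"
    and "lLip (length Xs) \<phi>" "set Xs \<subseteq> H"
  shows "(\<lambda>w. \<phi> (vals Xs w)) \<in> H"
  using assms unfolding sublinear_expectation_space_def vals_def by blast

lemma E_AE:
  assumes space: "sublinear_expectation_space \<Omega> H P E"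
    and XH: "X \<in> H" and YH: "Y \<in> H" and ae: "\<And>Q. Q \<in> P \<Longrightarrow> AE w in Q. X w = Y w"
  shows "E X = E Y"
proof -
  have int: "\<And>Z Q. Z \<in> H \<Longrightarrow> Q \<in> P \<Longrightarrow> integrable Q Z"
    and EH: "\<And>X. X \<in> H \<Longrightarrow> E X = (SUP Q\<in>P. integral\<^sup>L Q X)"
    using space unfolding sublinear_expectation_space_def by auto
  have "(SUP Q\<in>P. integral\<^sup>L Q X) = (SUP Q\<in>P. integral\<^sup>L Q Y)"
  proof (rule SUP_cong)
    fix Q assume Q: "Q \<in> P"
    show "integral\<^sup>L Q X = integral\<^sup>L Q Y"
      by (rule integral_cong_AE) (use ae[OF Q] borel_measurable_integrable[OF int[OF XH Q]]
          borel_measurable_integrable[OF int[OF YH Q]] in auto)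
  qed simp
  then show ?thesis using EH[OF XH] EH[OF YH] by simp
qed

lemma AE_zero:
  assumes space: "sublinear_expectation_space \<Omega> H P E"
    and gH: "g \<in> H" and Eg: "E g \<le> 0" and pos: "\<And>w. 0 \<le> g w" and Q: "Q \<in> P"
  shows "AE w in Q. g w = 0"
proof -
  have int: "integrable Q g" and bdd: "bdd_above ((\<lambda>Q. integral\<^sup>L Q g) ` P)"
    and EH: "E g = (SUP Q\<in>P. integral\<^sup>L Q g)"
    using space gH Q unfolding sublinear_expectation_space_def by auto
  have "integral\<^sup>L Q g \<le> (SUP Q\<in>P. integral\<^sup>L Q g)" by (rule cSUP_upper[OF Q bdd])
  then have "integral\<^sup>L Q g \<le> 0" using EH Eg by simp
  moreover have "0 \<le> integral\<^sup>L Q g" using pos by simp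
  ultimately have "integral\<^sup>L Q g = 0" by simp
  then show ?thesis using integral_nonneg_eq_0_iff_AE[OF int] pos by simp
qed

lemma len1: "length ys = Suc 0 \<Longrightarrow> \<exists>a. ys = [a]"
  by (cases ys) auto

lemma AE_range:
  assumes space: "sublinear_expectation_space \<Omega> H P E"
    and XH: "X \<in> H" and mX: "maximal_dist E [X] {[t] | t. a \<le> t \<and> t \<le> b}" and Q: "Q \<in> P"
  shows "AE w in Q. a \<le> X w \<and> X w \<le> b"
proof -
  define f1 where "f1 ys = max 0 (hd ys - b)" for ys :: "real list"
  define f2 where "f2 ys = max 0 (a - hd ys)" for ys :: "real list"
  have l1: "lipL 1 1 f1" unfolding lipL_def f1_def
  proof (intro allI impI)
    fix x y :: "real list" assume "length x = 1" "length y = 1"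
    then obtain u v where "x = [u]" "y = [v]" using len1 by force
    then show "\<bar>max 0 (hd x - b) - max 0 (hd y - b)\<bar> \<le> 1 * lnorm (map2 (-) x y)"
      by (simp add: lnorm_single)
  qed
  have l2: "lipL 1 1 f2" unfolding lipL_def f2_def
  proof (intro allI impI)
    fix x y :: "real list" assume "length x = 1" "length y = 1"
    then obtain u v where "x = [u]" "y = [v]" using len1 by force
    then show "\<bar>max 0 (a - hd x) - max 0 (a - hd y)\<bar> \<le> 1 * lnorm (map2 (-) x y)"
      by (simp add: lnorm_single)
  qed
  have XHs: "set [X] \<subseteq> H" using XH by simp
  obtain t1 where "a \<le> t1" "t1 \<le> b" "E (\<lambda>w. f1 (vals [X] w)) = f1 [t1]"
    using md_apply[OF mX, of f1] lipL_lLip[OF l1] by auto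
  then have E1: "E (\<lambda>w. f1 (vals [X] w)) \<le> 0" by (simp add: f1_def)
  obtain t2 where "a \<le> t2" "t2 \<le> b" "E (\<lambda>w. f2 (vals [X] w)) = f2 [t2]"
    using md_apply[OF mX, of f2] lipL_lLip[OF l2] by auto
  then have E2: "E (\<lambda>w. f2 (vals [X] w)) \<le> 0" by (simp add: f2_def)
  have A1: "AE w in Q. f1 (vals [X] w) = 0"
  proof -
    have "lLip (length [X]) f1" using lipL_lLip[OF l1] by simp
    from AE_zero[OF space H_comp[OF space this XHs] E1 _ Q] show ?thesis by (simp add: f1_def)
  qed
  have A2: "AE w in Q. f2 (vals [X] w) = 0"
  proof -
    have "lLip (length [X]) f2" using lipL_lLip[OF l2] by simp
    from AE_zero[OF space H_comp[OF space this XHs] E2 _ Q] show ?thesis by (simp add: f2_def)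
  qed
  show ?thesis using A1 A2 by eventually_elim (auto simp: f1_def f2_def vals_def)
qed


lemma eqE_clamp:
  assumes space: "sublinear_expectation_space \<Omega> H P E"
    and inH: "\<And>j. j < n \<Longrightarrow> V j \<in> H"
    and le: "\<And>j. j < n \<Longrightarrow> lo j \<le> hi j"
    and ae: "\<And>j Q. j < n \<Longrightarrow> Q \<in> P \<Longrightarrow> AE w in Q. lo j \<le> V j w \<and> V j w \<le> hi j"
    and l: "lLip n \<phi>"
  shows "E (\<lambda>w. \<phi> (vals (map V [0..<n]) w)) = E (\<lambda>w. \<phi> (clampL n lo hi (vals (map V [0..<n]) w)))"
proof (rule E_AE[OF space])
  have sH: "set (map V [0..<n]) \<subseteq> H" using inH by auto
  show "(\<lambda>w. \<phi> (vals (map V [0..<n]) w)) \<in> H"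
    by (rule H_comp[OF space _ sH]) (use l in simp)
  obtain L where "lipL n L (\<lambda>x. \<phi> (clampL n lo hi x))" using bLip_lipL[OF clamp_bLip[of n \<phi> lo hi, OF l le]] by blast
  then have "lLip (length (map V [0..<n])) (\<lambda>x. \<phi> (clampL n lo hi x))" using lipL_lLip by simp
  then show "(\<lambda>w. \<phi> (clampL n lo hi (vals (map V [0..<n]) w))) \<in> H"
    by (rule H_comp[OF space _ sH])
  fix Q assume Q: "Q \<in> P"
  have "AE w in Q. \<forall>j\<in>{0..<n}. lo j \<le> V j w \<and> V j w \<le> hi j"
    by (rule AE_finite_allI) (use ae Q in auto)
  then show "AE w in Q. \<phi> (vals (map V [0..<n]) w) = \<phi> (clampL n lo hi (vals (map V [0..<n]) w))"
  proof (rule AE_mp, intro AE_I2 impI)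
    fix w assume "\<forall>j\<in>{0..<n}. lo j \<le> V j w \<and> V j w \<le> hi j"
    then have "vals (map V [0..<n]) w \<in> box_list n lo hi"
      unfolding box_list_def vals_def by auto
    then show "\<phi> (vals (map V [0..<n]) w) = \<phi> (clampL n lo hi (vals (map V [0..<n]) w))"
      by (simp add: clampL_id)
  qed
qed

lemma step13:
  assumes IH: "maximal_dist E Xs (box_list m lo hi)" and lenX: "length Xs = m"
    and ind: "indep_of E Xs [Y]"
    and mY: "maximal_dist E [Y] {[t] | t. lo m \<le> t \<and> t \<le> hi m}"
    and eqE: "\<And>\<phi>. lLip (Suc m) \<phi> \<Longrightarrow>
       E (\<lambda>w. \<phi> (vals (Xs @ [Y]) w)) = E (\<lambda>w. \<phi> (clampL (Suc m) lo hi (vals (Xs @ [Y]) w)))"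
    and le: "\<And>j. j < Suc m \<Longrightarrow> lo j \<le> hi j"
  shows "maximal_dist E (Xs @ [Y]) (box_list (Suc m) lo hi)"
  unfolding maximal_dist_def
proof (intro allI impI)
  fix \<phi> assume "lLip (length (Xs @ [Y])) \<phi>"
  then have l: "lLip (Suc m) \<phi>" using lenX by simp
  define \<phi>t where "\<phi>t x = \<phi> (clampL (Suc m) lo hi x)" for x
  have bl: "bLip (Suc m) \<phi>t" unfolding \<phi>t_def by (rule clamp_bLip[OF l le])
  obtain L where lip: "lipL (Suc m) L \<phi>t" using bLip_lipL[OF bl] by blast
  define \<psi> where "\<psi> x = E (\<lambda>w'. \<phi>t (x @ vals [Y] w'))" for x
  have lip\<psi>: "lipL m L \<psi>" unfolding \<psi>_def by (rule psi_lip[OF lip mY])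
  have "lLip (length Xs) \<psi>" using lipL_lLip[OF lip\<psi>] lenX by simp
  then obtain \<theta>' where th': "\<theta>' \<in> box_list m lo hi" "E (\<lambda>w. \<psi> (vals Xs w)) = \<psi> \<theta>'"
    "\<forall>\<theta>''\<in>box_list m lo hi. \<psi> \<theta>'' \<le> \<psi> \<theta>'"
    using md_apply[OF IH] by blast
  have lt: "length \<theta>' = m" using th'(1) unfolding box_list_def by simp
  obtain t where t: "lo m \<le> t" "t \<le> hi m" "\<psi> \<theta>' = \<phi>t (\<theta>' @ [t])"
    using psi_props[OF lip mY lt] unfolding \<psi>_def by blast
  define \<theta> where "\<theta> = \<theta>' @ [t]"
  have thb: "\<theta> \<in> box_list (Suc m) lo hi"
    using th'(1) t lt unfolding box_list_def \<theta>_def by (auto simp: nth_append less_Suc_eq)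
  have ind': "E (\<lambda>w. \<phi>t (vals Xs w @ vals [Y] w)) = E (\<lambda>w. \<psi> (vals Xs w))"
    using ind bl lenX unfolding indep_of_def \<psi>_def by simp
  have va: "vals (Xs @ [Y]) w = vals Xs w @ vals [Y] w" for w by (simp add: vals_def)
  have "E (\<lambda>w. \<phi> (vals (Xs @ [Y]) w)) = E (\<lambda>w. \<phi>t (vals (Xs @ [Y]) w))"
    unfolding \<phi>t_def by (rule eqE[OF l])
  also have "\<dots> = \<psi> \<theta>'" unfolding va ind' th'(2) ..
  also have "\<dots> = \<phi> \<theta>" using t(3) thb unfolding \<phi>t_def \<theta>_def by (simp add: clampL_id)
  finally have eq: "E (\<lambda>w. \<phi> (vals (Xs @ [Y]) w)) = \<phi> \<theta>" .
  have mx: "\<phi> \<theta>'' \<le> \<phi> \<theta>" if tb: "\<theta>'' \<in> box_list (Suc m) lo hi" for \<theta>''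
  proof -
    have l2: "length \<theta>'' = Suc m" using tb unfolding box_list_def by simp
    have sp: "\<theta>'' = take m \<theta>'' @ [\<theta>'' ! m]" using l2 by (metis lessI take_Suc_conv_app_nth take_all order_refl)
    have tk: "take m \<theta>'' \<in> box_list m lo hi" using tb l2 unfolding box_list_def by auto
    have rng: "lo m \<le> \<theta>'' ! m \<and> \<theta>'' ! m \<le> hi m" using tb unfolding box_list_def by auto
    obtain s where s: "\<psi> (take m \<theta>'') = \<phi>t (take m \<theta>'' @ [s])"
      "\<forall>r. lo m \<le> r \<and> r \<le> hi m \<longrightarrow> \<phi>t (take m \<theta>'' @ [r]) \<le> \<phi>t (take m \<theta>'' @ [s])"
      using psi_props[OF lip mY, of "take m \<theta>''"] l2 unfolding \<psi>_def by auto
    have "\<phi> \<theta>'' = \<phi>t \<theta>''" using tb unfolding \<phi>t_def by (simp add: clampL_id)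
    also have "\<dots> \<le> \<psi> (take m \<theta>'')" using s rng sp by metis
    also have "\<dots> \<le> \<psi> \<theta>'" using th'(3) tk by blast
    also have "\<dots> = \<phi> \<theta>" using t(3) thb unfolding \<phi>t_def \<theta>_def by (simp add: clampL_id)
    finally show ?thesis .
  qed
  show "\<exists>\<theta>\<in>box_list (Suc m) lo hi. E (\<lambda>w. \<phi> (vals (Xs @ [Y]) w)) = \<phi> \<theta> \<and>
          (\<forall>\<theta>'\<in>box_list (Suc m) lo hi. \<phi> \<theta>' \<le> \<phi> \<theta>)"
    using thb eq mx by blast
qed


lemma one_three:
  assumes space: "sublinear_expectation_space \<Omega> H P E"
    and inH: "\<And>i. i < d \<Longrightarrow> V i \<in> H"
    and le: "\<And>i. i < d \<Longrightarrow> lo i \<le> hi i"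
    and maxV: "\<And>i. i < d \<Longrightarrow> maximal_dist E [V i] {[t] | t. lo i \<le> t \<and> t \<le> hi i}"
    and si: "seq_indep E (map V [0..<d])"
  shows "maximal_dist E (map V [0..<d]) (box_list d lo hi)"
proof -
  have ae: "\<And>j Q. j < d \<Longrightarrow> Q \<in> P \<Longrightarrow> AE w in Q. lo j \<le> V j w \<and> V j w \<le> hi j"
    using AE_range[OF space inH maxV] by blast
  have "m \<le> d \<Longrightarrow> maximal_dist E (map V [0..<m]) (box_list m lo hi)" for m
  proof (induction m)
    case 0
    have "box_list 0 lo hi = {[]}" unfolding box_list_def by auto
    then show ?case unfolding maximal_dist_def vals_def by (simp add: E_const[OF space])
  next
    case (Suc m)
    then have m: "m < d" by simp
    have ind: "indep_of E (map V [0..<m]) [V m]"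
    proof (cases "m = 0")
      case True
      then show ?thesis unfolding indep_of_def vals_def by (simp add: E_const[OF space])
    next
      case False
      then have "indep_of E (take m (map V [0..<d])) [map V [0..<d] ! m]"
        using si m unfolding seq_indep_def by simp
      then show ?thesis using m by (simp add: take_map)
    qed
    have "maximal_dist E (map V [0..<m] @ [V m]) (box_list (Suc m) lo hi)"
    proof (rule step13[OF Suc.IH[OF less_imp_le[OF m]] _ ind maxV[OF m]])
      show "length (map V [0..<m]) = m" by simp
      fix \<phi> :: "real list \<Rightarrow> real" assume "lLip (Suc m) \<phi>"
      then show "E (\<lambda>w. \<phi> (vals (map V [0..<m] @ [V m]) w)) =
                 E (\<lambda>w. \<phi> (clampL (Suc m) lo hi (vals (map V [0..<m] @ [V m]) w)))"
        using eqE_clamp[OF space, of "Suc m" V lo hi \<phi>] inH le ae m by simp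
    next
      fix j assume "j < Suc m" then show "lo j \<le> hi j" using le m by simp
    qed
    then show ?case by simp
  qed
  then show ?thesis by simp
qed

theorem mainTheorem6:
  fixes \<Omega> :: "'w set" and H :: "('w \<Rightarrow> real) set" and P :: "'w measure set"
    and E :: "('w \<Rightarrow> real) \<Rightarrow> real"
    and d :: nat and V :: "nat \<Rightarrow> 'w \<Rightarrow> real" and lo hi :: "nat \<Rightarrow> real"
  assumes space: "sublinear_expectation_space \<Omega> H P E"
    and inH: "\<And>i. i < d \<Longrightarrow> V i \<in> H"
    and le: "\<And>i. i < d \<Longrightarrow> lo i \<le> hi i"
    and maxV: "\<And>i. i < d \<Longrightarrow> maximal_dist E [V i] {[t] | t. lo i \<le> t \<and> t \<le> hi i}"
  shows "(seq_indep E (map V [0..<d]) \<longleftrightarrow>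
            (\<forall>p. p permutes {0..<d} \<longrightarrow> seq_indep E (map (\<lambda>j. V (p j)) [0..<d])))
       \<and> (seq_indep E (map V [0..<d]) \<longleftrightarrow>
            maximal_dist E (map V [0..<d]) (box_list d lo hi))"
proof -
  have A: "seq_indep E (map V [0..<d]) \<Longrightarrow> maximal_dist E (map V [0..<d]) (box_list d lo hi)"
    by (rule one_three[OF space inH le maxV])
  have B: "maximal_dist E (map V [0..<d]) (box_list d lo hi) \<Longrightarrow> seq_indep E (map V [0..<d])"
    by (rule three_one[OF _ maxV])
  have C: "seq_indep E (map (\<lambda>j. V (p j)) [0..<d])"
    if si: "seq_indep E (map V [0..<d])" and p: "p permutes {0..<d}" for p
  proof -
    have pd: "j < d \<Longrightarrow> p j < d" for j using permutes_in_image[OF p] by simp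
    have "maximal_dist E (map (\<lambda>j. V (p j)) [0..<d]) (box_list d (\<lambda>j. lo (p j)) (\<lambda>j. hi (p j)))"
      by (rule perm_md[OF A[OF si] p])
    then show ?thesis
      by (rule three_one) (use maxV pd in auto)
  qed
  have D: "seq_indep E (map V [0..<d])"
    if "\<forall>p. p permutes {0..<d} \<longrightarrow> seq_indep E (map (\<lambda>j. V (p j)) [0..<d])"
    using that permutes_id[of "{0..<d}"] by (simp add: id_def)
  show ?thesis using A B C D by blast
qed

end
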